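(* Let $T>0$, $H_T=(0,T)\times(0,\infty)$, let $\tilde U\in C([0,T])$ with $\tilde U\le0$, and let $w_0\ge0$ be continuous on $[0,\infty)$. Let $w$ be a classical solution (continuous on $\overline{H_T}$, $C^1$ in $t$ and $C^2$ in $y$ in $H_T$) of $$\partial_tw-w^2+\partial_y^{-1}(w+\tilde U)\,\partial_yw-2\tilde Uw+\int_{+\infty}^yw\,dy'-\partial_y^2w=0\ \text{ in }H_T,$$ $$w|_{t=0}=w_0,\qquad w|_{y=0}=-\tilde U(t),\qquad \lim_{y\to+\infty}w=0,$$ such that $\sup_{H_T}|w(t,y)|e^{y}<\infty$ and $w(t,y)e^{y}\to0$ as $y\to+\infty$ uniformly in $t\in[0,T]$. Then $w\ge0$ in $H_T$.
   Context: $\partial_y^{-1}f(t,y):=\int_0^yf(t,y')dy'$. (In the paper $w=\tilde u-\tilde U$ with $\tilde u(t,y)=-\partial_xu(t,0,y)$, $\tilde U(t)=-\partial_xU(t,0)$ for a solution $u$ of the geophysical boundary layer problem.) *)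

theory Defs
  imports "HOL-Analysis.Analysis"
begin

end

theory Submission
  imports Defs
begin

lemma integrable_exp_bound:
  fixes f :: "real \<Rightarrow> real"
  assumes "continuous_on {a..} f" "\<And>s. s \<ge> a \<Longrightarrow> \<bar>f s\<bar> \<le> C * exp (- s)"
  shows "f integrable_on {a..}"
proof (rule measurable_bounded_by_integrable_imp_integrable[of f "{a..}" "\<lambda>s. C * exp (-1 * s)"])
  show "f \<in> borel_measurable (lebesgue_on {a..})"
    by (rule continuous_imp_measurable_on_sets_lebesgue[OF assms(1)]) auto
  show "(\<lambda>s. C * exp (-1 * s)) integrable_on {a..}"
    using has_integral_mult_right[OF has_integral_exp_minus_to_infinity[of 1 a], of C]
    unfolding integrable_on_def by auto
  show "{a..} \<in> sets lebesgue" by auto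
  show "\<And>x. x \<in> {a..} \<Longrightarrow> norm (f x) \<le> C * exp (-1 * x)" using assms(2) by auto
qed

lemma exp_int_0:
  fixes M y :: real
  assumes "y \<ge> 0"
  shows "((\<lambda>s. M * exp (- s)) has_integral (M - M * exp (- y))) {0..y}"
proof -
  have "((\<lambda>s. M * exp (- s)) has_integral ((- M * exp (- y)) - (- M * exp (- 0)))) {0..y}"
    using assms
    by (intro fundamental_theorem_of_calculus)
       (auto intro!: derivative_eq_intros
             simp flip: has_real_derivative_iff_has_vector_derivative)
  then show ?thesis by simp
qed

theorem lemma3p2:
  fixes T :: real and U w0 :: "real \<Rightarrow> real"
    and w wt wy wyy :: "real \<Rightarrow> real \<Rightarrow> real"
  assumes T_pos: "T > 0"
    and U_cont: "continuous_on {0..T} U"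
    and U_nonpos: "\<forall>t\<in>{0..T}. U t \<le> 0"
    and w0_cont: "continuous_on {0..} w0"
    and w0_nonneg: "\<forall>y\<ge>0. w0 y \<ge> 0"
    and w_cont: "continuous_on ({0..T} \<times> {0..}) (\<lambda>(t, y). w t y)"
    and wt_deriv: "\<forall>t\<in>{0<..<T}. \<forall>y>0. ((\<lambda>s. w s y) has_real_derivative wt t y) (at t)"
    and wy_deriv: "\<forall>t\<in>{0<..<T}. \<forall>y>0. ((\<lambda>s. w t s) has_real_derivative wy t y) (at y)"
    and wyy_deriv: "\<forall>t\<in>{0<..<T}. \<forall>y>0. ((\<lambda>s. wy t s) has_real_derivative wyy t y) (at y)"
    and wt_cont: "continuous_on ({0<..<T} \<times> {0<..}) (\<lambda>(t, y). wt t y)"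
    and wy_cont: "continuous_on ({0<..<T} \<times> {0<..}) (\<lambda>(t, y). wy t y)"
    and wyy_cont: "continuous_on ({0<..<T} \<times> {0<..}) (\<lambda>(t, y). wyy t y)"
    and eqn: "\<forall>t\<in>{0<..<T}. \<forall>y>0.
       wt t y - (w t y)\<^sup>2 + integral {0..y} (\<lambda>s. w t s + U t) * wy t y
       - 2 * U t * w t y - integral {y..} (\<lambda>s. w t s) - wyy t y = 0"
    and init: "\<forall>y\<ge>0. w 0 y = w0 y"
    and bdry: "\<forall>t\<in>{0..T}. w t 0 = - U t"
    and lim_inf: "\<forall>t\<in>{0..T}. ((\<lambda>y. w t y) \<longlongrightarrow> 0) at_top"
    and bound: "\<exists>M. \<forall>t\<in>{0<..<T}. \<forall>y>0. \<bar>w t y\<bar> * exp y \<le> M"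
    and unif_decay: "\<forall>\<epsilon>>0. \<exists>Y. \<forall>t\<in>{0..T}. \<forall>y\<ge>Y. \<bar>w t y\<bar> * exp y \<le> \<epsilon>"
  shows "\<forall>t\<in>{0<..<T}. \<forall>y>0. w t y \<ge> 0"
proof (intro ballI allI impI)
  fix t1 y1 :: real
  assume t1: "t1 \<in> {0<..<T}" and y1: "y1 > 0"
  show "w t1 y1 \<ge> 0"
  proof (rule ccontr)
    assume "\<not> w t1 y1 \<ge> 0"
    hence neg: "w t1 y1 < 0" by simp
    obtain M0 where M0: "\<forall>t\<in>{0<..<T}. \<forall>y>0. \<bar>w t y\<bar> * exp y \<le> M0" using bound by blast
    define M where "M = max M0 0"
    have M0le: "M0 \<le> M" "0 \<le> M" unfolding M_def by auto
    have Mb: "\<bar>w t y\<bar> \<le> M * exp (- y)" if "t \<in> {0<..<T}" "y > 0" for t y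
    proof -
      have "\<bar>w t y\<bar> * exp y \<le> M" using M0 that M0le by force
      then show ?thesis by (simp add: exp_minus field_simps)
    qed
    define lam where "lam = M / 2 + 3"
    have lam_pos: "lam > 0" using M0le unfolding lam_def by auto
    define phi where "phi t y = exp (- lam * t) * exp (y / 2) * w t y" for t y
    have contw: "continuous_on ({0..T} \<times> {0..}) (\<lambda>p. w (fst p) (snd p))"
      using w_cont by (simp add: case_prod_beta)
    define m0 where "m0 = - phi t1 y1"
    have m0_pos: "m0 > 0" unfolding m0_def phi_def using neg
      by (simp add: mult_pos_neg)
    obtain Y where Y: "\<forall>t\<in>{0..T}. \<forall>y\<ge>Y. \<bar>w t y\<bar> * exp y \<le> m0 / 2"
      using unif_decay m0_pos by (meson half_gt_zero)
    define Y' where "Y' = max Y y1"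
    have Y'pos: "Y' > 0" "y1 \<le> Y'" unfolding Y'_def using y1 by auto
    have far: "phi t y \<ge> - (m0 / 2)" if "t \<in> {0..T}" "y \<ge> Y'" for t y
    proof -
      have h1: "\<bar>w t y\<bar> * exp y \<le> m0 / 2" using Y that unfolding Y'_def by auto
      have e1: "exp (- lam * t) \<le> 1" using that lam_pos by auto
      have e2: "exp (y / 2) \<le> exp y" using that Y'pos by auto
      have "\<bar>phi t y\<bar> = exp (- lam * t) * exp (y / 2) * \<bar>w t y\<bar>"
        unfolding phi_def by (simp add: abs_mult)
      also have "\<dots> \<le> 1 * exp y * \<bar>w t y\<bar>"
        by (intro mult_mono e1 e2) auto
      finally show ?thesis using h1 by (simp add: mult.commute)
    qed
    define S where "S = {0..t1} \<times> {0..Y'}"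
    have Ssub: "S \<subseteq> {0..T} \<times> {0..}" unfolding S_def using t1 by auto
    have contphi: "continuous_on S (\<lambda>p. phi (fst p) (snd p))"
      unfolding phi_def
      by (intro continuous_intros continuous_on_subset[OF contw Ssub]) auto
    have "compact S" unfolding S_def by (intro compact_Times) auto
    moreover have "S \<noteq> {}" unfolding S_def using t1 Y'pos by auto
    ultimately obtain p0 where p0: "p0 \<in> S" "\<forall>q\<in>S. phi (fst p0) (snd p0) \<le> phi (fst q) (snd q)"
      using continuous_attains_inf[OF _ _ contphi] by blast
    define t0 where "t0 = fst p0"
    define y0 where "y0 = snd p0"
    have p0S: "t0 \<in> {0..t1}" "y0 \<in> {0..Y'}" using p0(1) unfolding S_def t0_def y0_def by auto
    have le1: "phi t0 y0 \<le> phi t1 y1"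
      using p0(2)[rule_format, of "(t1, y1)"] t1 Y'pos y1 unfolding S_def t0_def y0_def by auto
    have glob: "phi t0 y0 \<le> phi t y" if "t \<in> {0..t1}" "y \<ge> 0" for t y
    proof (cases "y \<le> Y'")
      case True
      then show ?thesis using p0(2)[rule_format, of "(t, y)"] that unfolding S_def t0_def y0_def by auto
    next
      case False
      then have "phi t y \<ge> - (m0 / 2)" using far[of t y] that t1 by auto
      then show ?thesis using le1 m0_pos unfolding m0_def by linarith
    qed
    define W where "W = w t0 y0"
    have phineg: "phi t0 y0 < 0" using le1 m0_pos unfolding m0_def by linarith
    have Wneg: "W < 0"
    proof (rule ccontr)
      assume "\<not> W < 0"
      then have "phi t0 y0 \<ge> 0" unfolding phi_def W_def by simp
      then show False using phineg by simp
    qed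
    have t0pos: "t0 > 0"
    proof (rule ccontr)
      assume "\<not> t0 > 0"
      then have "t0 = 0" using p0S by auto
      then have "W \<ge> 0" unfolding W_def using init w0_nonneg p0S by auto
      then show False using Wneg by simp
    qed
    have y0pos: "y0 > 0"
    proof (rule ccontr)
      assume "\<not> y0 > 0"
      then have "y0 = 0" using p0S by auto
      then have "W \<ge> 0" unfolding W_def using bdry U_nonpos p0S t1 by auto
      then show False using Wneg by simp
    qed
    have t0T: "t0 \<in> {0<..<T}" using t0pos p0S t1 by auto
    have wt_le: "wt t0 y0 \<le> lam * W"
    proof (rule ccontr)
      assume "\<not> wt t0 y0 \<le> lam * W"
      define h where "h t = exp (- lam * t) * w t y0" for t
      have e: "((\<lambda>t. exp (- lam * t)) has_real_derivative exp (- lam * t0) * (- lam)) (at t0)"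
        by (auto intro!: derivative_eq_intros)
      have D: "(h has_real_derivative (exp (- lam * t0) * (- lam) * W + exp (- lam * t0) * wt t0 y0)) (at t0)"
        unfolding h_def W_def
        using DERIV_mult[OF e wt_deriv[rule_format, OF t0T y0pos]] by (simp add: algebra_simps)
      have "exp (- lam * t0) * (- lam) * W + exp (- lam * t0) * wt t0 y0
            = exp (- lam * t0) * (wt t0 y0 - lam * W)" by (simp add: algebra_simps)
      also have "\<dots> > 0" using \<open>\<not> wt t0 y0 \<le> lam * W\<close> by simp
      finally obtain d where d: "d > 0" "\<forall>k>0. k < d \<longrightarrow> h (t0 - k) < h t0"
        using DERIV_pos_inc_left[OF D] by blast
      define k where "k = min (d / 2) t0"
      have k: "k > 0" "k < d" "k \<le> t0" unfolding k_def using d t0pos by auto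
      have "h (t0 - k) < h t0" using d k by auto
      moreover have "phi t0 y0 \<le> phi (t0 - k) y0" using glob[of "t0 - k" y0] k p0S y0pos by auto
      ultimately show False unfolding phi_def h_def
        by (simp add: mult.assoc mult.left_commute[of "exp (y0/2)"])
    qed
    define g where "g s = exp (s / 2) * w t0 s" for s
    define G where "G s = exp (s / 2) * wy t0 s + exp (s / 2) / 2 * w t0 s" for s
    have e2: "((\<lambda>s. exp (s / 2)) has_real_derivative exp (s / 2) / 2) (at s)" for s
      by (auto intro!: derivative_eq_intros)
    have e3: "((\<lambda>s. exp (s / 2) / 2) has_real_derivative exp (s / 2) / 4) (at s)" for s
      by (auto intro!: derivative_eq_intros)
    have gD: "(g has_real_derivative G s) (at s)" if "s > 0" for s
      unfolding g_def G_def
      using DERIV_mult[OF e2 wy_deriv[rule_format, OF t0T that]] by (simp add: algebra_simps)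
    have gmin: "g y0 \<le> g s" if "s \<ge> 0" for s
    proof -
      have "phi t0 y0 \<le> phi t0 s" using glob[of t0 s] that p0S by auto
      then show ?thesis unfolding phi_def g_def
        by (simp add: mult.assoc)
    qed
    have "G y0 = 0"
      by (rule DERIV_local_min[OF gD[OF y0pos] y0pos]) (auto intro: gmin)
    then have "exp (y0/2) * (wy t0 y0 + W / 2) = 0" unfolding G_def W_def
      by (simp add: algebra_simps)
    then have wyv: "wy t0 y0 = - W / 2" by simp
    have wyy_ge: "wyy t0 y0 \<ge> W / 4"
    proof (rule ccontr)
      assume A: "\<not> wyy t0 y0 \<ge> W / 4"
      have GD: "(G has_real_derivative
          (exp (y0/2) * (1/2) * wy t0 y0 + exp (y0/2) * wyy t0 y0
           + (exp (y0/2) * (1/2) / 2 * W + exp (y0/2) / 2 * wy t0 y0))) (at y0)"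
        unfolding G_def W_def
        using DERIV_add[OF DERIV_mult[OF e2 wyy_deriv[rule_format, OF t0T y0pos]]
                           DERIV_mult[OF e3 wy_deriv[rule_format, OF t0T y0pos]]]
        by (simp add: algebra_simps)
      have "exp (y0/2) * (1/2) * wy t0 y0 + exp (y0/2) * wyy t0 y0
           + (exp (y0/2) * (1/2) / 2 * W + exp (y0/2) / 2 * wy t0 y0)
           = exp (y0/2) * (wyy t0 y0 - W / 4)" unfolding wyv by (simp add: algebra_simps)
      also have "\<dots> < 0" using A by (simp add: mult_pos_neg)
      finally obtain d where d: "d > 0" "\<forall>k>0. k < d \<longrightarrow> G y0 > G (y0 + k)"
        using DERIV_neg_dec_right[OF GD] by blast
      define k where "k = d / 2"
      have k: "k > 0" "k < d" unfolding k_def using d by auto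
      obtain z where z: "z > y0" "z < y0 + k" "g (y0 + k) - g y0 = (y0 + k - y0) * G z"
        using MVT2[of y0 "y0 + k" g G] k gD y0pos by force
      have "G z < 0" using d(2)[rule_format, of "z - y0"] z k \<open>G y0 = 0\<close> by auto
      then have "k * G z < 0" using k(1) by (simp add: mult_pos_neg)
      then have "g (y0 + k) < g y0" using z by simp
      moreover have "g y0 \<le> g (y0 + k)" using gmin k y0pos by auto
      ultimately show False by simp
    qed
    have wlow: "w t0 s \<ge> W * exp (y0 / 2) * exp (- (1/2) * s)" if "s \<ge> 0" for s
    proof -
      have "phi t0 y0 \<le> phi t0 s" using glob[of t0 s] that p0S by auto
      then have "exp (y0 / 2) * W \<le> exp (s / 2) * w t0 s"
        unfolding phi_def W_def by (simp add: mult.assoc)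
      then have "exp (y0 / 2) * W * exp (- (s / 2)) \<le> w t0 s"
        by (simp add: exp_minus field_simps)
      then show ?thesis by (simp add: mult.commute mult.left_commute)
    qed
    have contw0: "continuous_on {0..} (w t0)"
    proof -
      have "continuous_on {0..} (\<lambda>s. w (fst (t0, s)) (snd (t0, s)))"
        by (intro continuous_on_compose2[OF contw] continuous_intros) (use t0T in auto)
      then show ?thesis by simp
    qed
    have intI: "w t0 integrable_on {y0..}"
    proof (rule integrable_exp_bound[where C = M])
      show "continuous_on {y0..} (w t0)" by (rule continuous_on_subset[OF contw0]) (use y0pos in auto)
      show "\<bar>w t0 s\<bar> \<le> M * exp (- s)" if "y0 \<le> s" for s using Mb[OF t0T, of s] that y0pos by simp
    qed
    have hlow: "((\<lambda>s. W * exp (y0 / 2) * exp (- (1/2) * s)) has_integral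
                 W * exp (y0 / 2) * (exp (- (1/2) * y0) / (1/2))) {y0..}"
      by (rule has_integral_mult_right has_integral_exp_minus_to_infinity)+ simp
    have "W * exp (y0 / 2) * (exp (- (1/2) * y0) / (1/2)) = 2 * W"
      by (simp add: exp_minus field_simps)
    with hlow have hlow2: "((\<lambda>s. W * exp (y0 / 2) * exp (- (1/2) * s)) has_integral 2 * W) {y0..}"
      by metis
    have Ige: "integral {y0..} (\<lambda>s. w t0 s) \<ge> 2 * W"
      using has_integral_le[OF hlow2 integrable_integral[OF intI]] wlow y0pos by force
    have hE: "((\<lambda>s. M * exp (- s)) has_integral (M - M * exp (- y0))) {0..y0}"
      using exp_int_0[of y0 M] y0pos by simp
    define f' where "f' s = min (w t0 s) (M * exp (- s))" for s
    have "integral {0..y0} (w t0) = integral {0..y0} f'"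
    proof (rule integral_spike[of "{0}"])
      fix s assume "s \<in> {0..y0} - {0}"
      then have "s > 0" by auto
      then show "f' s = w t0 s" using Mb[OF t0T, of s] unfolding f'_def by simp
    qed simp
    also have "\<dots> \<le> integral {0..y0} (\<lambda>s. M * exp (- s))"
    proof (rule integral_le)
      show "f' integrable_on {0..y0}" unfolding f'_def
        by (intro integrable_continuous_interval continuous_intros
              continuous_on_subset[OF contw0]) auto
      show "(\<lambda>s. M * exp (- s)) integrable_on {0..y0}"
        using hE unfolding integrable_on_def by blast
    qed (auto simp: f'_def)
    also have "\<dots> = M - M * exp (- y0)" using hE by (rule integral_unique)
    also have "\<dots> \<le> M" using M0le by simp
    finally have Ble: "integral {0..y0} (w t0) \<le> M" .
    have "((\<lambda>s. w t0 s + U t0) has_integral (integral {0..y0} (w t0) + Henstock_Kurzweil_Integration.content {0..y0} *\<^sub>R U t0)) {0..y0}"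
      by (intro has_integral_add has_integral_const_real integrable_integral
            integrable_continuous_interval continuous_on_subset[OF contw0]) auto
    then have Aeq: "integral {0..y0} (\<lambda>s. w t0 s + U t0) = integral {0..y0} (w t0) + y0 * U t0"
      using y0pos by (simp add: integral_unique)
    have E: "wt t0 y0 - W\<^sup>2 + (integral {0..y0} (w t0) + y0 * U t0) * wy t0 y0
       - 2 * U t0 * W - integral {y0..} (\<lambda>s. w t0 s) - wyy t0 y0 = 0"
      using eqn[rule_format, OF t0T y0pos] Aeq unfolding W_def by simp
    have U0: "U t0 \<le> 0" using U_nonpos t0T by auto
    have f1: "integral {0..y0} (w t0) * W \<ge> M * W" using Ble Wneg by (simp add: mult_right_mono_neg)
    have f3: "U t0 * W \<ge> 0" using U0 Wneg by (simp add: mult_nonpos_nonpos)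
    have f2: "y0 * U t0 * W \<ge> 0" using y0pos f3
      by (simp add: mult.assoc)
    have f4: "W\<^sup>2 \<ge> 0" by simp
    have f5: "lam * W < (M / 2 + 9 / 4) * W" unfolding lam_def using Wneg by (simp add: mult_strict_right_mono_neg)
    have "wt t0 y0 = W\<^sup>2 + (integral {0..y0} (w t0) * W) / 2 + (y0 * U t0 * W) / 2
       + 2 * U t0 * W + integral {y0..} (\<lambda>s. w t0 s) + wyy t0 y0"
      using E wyv by (simp add: algebra_simps)
    moreover have f7: "2 * U t0 * W \<ge> 0" using f3 by (simp add: mult.commute)
    moreover have f6: "(M / 2 + 9 / 4) * W = (M * W) / 2 + 9 / 4 * W" by (simp add: algebra_simps)
    ultimately show False using f1 f2 f3 f4 f5 wt_le Ige wyy_ge by linarith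
  qed
qed

end
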